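(* Assume Assumptions 2. For every $s\in(0,1)$ there exists $\kappa_0<\infty$, depending only on $\|\nu\|_\infty$, $\|\sigma_0\|_\infty$, $\|\sigma_1\|_\infty$, $K$ and $s$, such that for all $\kappa\ge\kappa_0$, $$\sup_{E\in\mathbb R}\|T_{\kappa,E,s}\|<1,$$ where $\|T_{\kappa,E,s}\|$ is the operator norm on $C(\overline{\mathbb C^+})$ with the sup-norm.
   Context: Assumptions 2: $\nu$ has bounded density (also $\nu$) supported in $[-K,K]$, $K<\infty$; $\sigma$ is a probability measure on $\mathbb R^2$ supported in $[-1,1]^2$ whose marginals $\sigma_0,\sigma_1$ have bounded densities (also denoted $\sigma_0,\sigma_1$). Let $\overline{\mathbb C^+}=\mathbb C^+\cup\mathbb R\cup\{i\infty\}$, $C(\overline{\mathbb C^+})$ the continuous complex functions on $\mathbb C^+\cup\mathbb R$ with a finite limit at infinity. For $\kappa\ge0$, $\mu$ is the law of $q=(r+\kappa p_0,r+\kappa p_1)$ with $r\sim\nu$, $(p_0,p_1)\sim\sigma$ independent. For $z\in\mathbb C^+\cup\mathbb R$, $\phi^\pm_{z,q}(w)=\tfrac12\big(\frac{-1}{w+(z-q_0)/\sqrt2}\pm\frac{-1}{w+(z-q_1)/\sqrt2}\big)$, $\phi^\pm_{z,q}(i\infty)=0$, and $(T_{\kappa,z,s}f)(w)=\int f(\phi^+_{z,q}(w))\big(|\phi^+_{z,q}(w)|^s+|\phi^-_{z,q}(w)|^s\big)d\mu(q)$, $(T_{\kappa,z,s}f)(i\infty)=0$. *)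

theory Defs
  imports "HOL-Probability.Probability"
begin

definition Hc :: "complex set" where
  "Hc = {z. Im z \<ge> 0}"

text \<open>The space C of the closed upper half plane compactified by i-infinity:
  continuous functions on the closed half plane with a finite limit at infinity.\<close>
definition Cspace :: "(complex \<Rightarrow> complex) set" where
  "Cspace = {f. continuous_on Hc f \<and> (\<exists>L. (f \<longlongrightarrow> L) (inf at_infinity (principal Hc)))}"

text \<open>Sup norm on C (the value at i-infinity is a limit of values on Hc).\<close>
definition supnorm :: "(complex \<Rightarrow> complex) \<Rightarrow> real" where
  "supnorm f = (SUP w\<in>Hc. cmod (f w))"

text \<open>Assumptions 2, with explicit bounds Bnu, B0, B1 for the sup norms of the densities.\<close>
definition Assumptions2 ::
  "(real \<Rightarrow> real) \<Rightarrow> (real \<times> real) measure \<Rightarrow> (real \<Rightarrow> real) \<Rightarrow> (real \<Rightarrow> real)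
   \<Rightarrow> real \<Rightarrow> real \<Rightarrow> real \<Rightarrow> real \<Rightarrow> bool" where
  "Assumptions2 nu sg s0 s1 K Bnu B0 B1 \<longleftrightarrow>
     nu \<in> borel_measurable borel \<and> (\<forall>x. 0 \<le> nu x \<and> nu x \<le> Bnu) \<and>
     (\<forall>x. x \<notin> {-K..K} \<longrightarrow> nu x = 0) \<and> prob_space (density lborel nu) \<and>
     prob_space sg \<and> sets sg = sets borel \<and>
     emeasure sg (UNIV - {-1..1} \<times> {-1..1}) = 0 \<and>
     s0 \<in> borel_measurable borel \<and> (\<forall>x. 0 \<le> s0 x \<and> s0 x \<le> B0) \<and>
     s1 \<in> borel_measurable borel \<and> (\<forall>x. 0 \<le> s1 x \<and> s1 x \<le> B1) \<and>
     distr sg lborel fst = density lborel s0 \<and>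
     distr sg lborel snd = density lborel s1"

definition mu_law :: "(real \<Rightarrow> real) \<Rightarrow> (real \<times> real) measure \<Rightarrow> real \<Rightarrow> (real \<times> real) measure" where
  "mu_law nu sg \<kappa> =
     distr (density lborel nu \<Otimes>\<^sub>M sg) borel
       (\<lambda>(r, p). (r + \<kappa> * fst p, r + \<kappa> * snd p))"

definition phi_plus :: "complex \<Rightarrow> real \<times> real \<Rightarrow> complex \<Rightarrow> complex" where
  "phi_plus z q w = (1/2) * ((-1) / (w + (z - complex_of_real (fst q)) / sqrt 2)
                          + (-1) / (w + (z - complex_of_real (snd q)) / sqrt 2))"

definition phi_minus :: "complex \<Rightarrow> real \<times> real \<Rightarrow> complex \<Rightarrow> complex" where
  "phi_minus z q w = (1/2) * ((-1) / (w + (z - complex_of_real (fst q)) / sqrt 2)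
                          - (-1) / (w + (z - complex_of_real (snd q)) / sqrt 2))"

definition T_integrand ::
  "complex \<Rightarrow> real \<Rightarrow> (complex \<Rightarrow> complex) \<Rightarrow> complex \<Rightarrow> real \<times> real \<Rightarrow> complex" where
  "T_integrand z s f w q =
     f (phi_plus z q w) *
     complex_of_real (cmod (phi_plus z q w) powr s + cmod (phi_minus z q w) powr s)"

text \<open>(T_{kappa,z,s} f)(w) for w in the closed half plane (value at i-infinity is 0).\<close>
definition T_op ::
  "(real \<Rightarrow> real) \<Rightarrow> (real \<times> real) measure \<Rightarrow> real \<Rightarrow> complex \<Rightarrow> real
   \<Rightarrow> (complex \<Rightarrow> complex) \<Rightarrow> complex \<Rightarrow> complex" where
  "T_op nu sg \<kappa> z s f w = (\<integral>q. T_integrand z s f w q \<partial>mu_law nu sg \<kappa>)"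

end

theory Submission
  imports Defs
begin


definition psi :: "real \<Rightarrow> real \<Rightarrow> ennreal" where
  "psi s t = (if t = 0 then \<infinity> else ennreal (\<bar>t\<bar> powr (-s)))"

definition aa :: "complex \<Rightarrow> (real\<times>real \<Rightarrow> real) \<Rightarrow> complex \<Rightarrow> real\<times>real \<Rightarrow> complex" where
  "aa z p w q = w + (z - complex_of_real (p q)) / sqrt 2"

definition WW :: "complex \<Rightarrow> real \<Rightarrow> complex \<Rightarrow> real\<times>real \<Rightarrow> real" where
  "WW z s w q = cmod (phi_plus z q w) powr s + cmod (phi_minus z q w) powr s"

lemma phi_plus_aa: "phi_plus z q w = (1/2) * ((-1) / aa z fst w q + (-1) / aa z snd w q)"
  unfolding phi_plus_def aa_def by simp

lemma phi_minus_aa: "phi_minus z q w = (1/2) * ((-1) / aa z fst w q - (-1) / aa z snd w q)"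
  unfolding phi_minus_def aa_def by simp

lemma Re_aa: "Im z = 0 \<Longrightarrow> Re (aa z p w q) = Re w + (Re z - p q) / sqrt 2"
  unfolding aa_def by simp

lemma Im_aa: "Im z = 0 \<Longrightarrow> Im (aa z p w q) = Im w"
  unfolding aa_def by simp

lemma norm_m1_div: "cmod ((-1) / a) = inverse (cmod a)"
  by (simp add: norm_divide divide_inverse norm_inverse)

lemma half_sum_powr:
  fixes u v s :: real
  assumes "0 \<le> u" "0 \<le> v" "0 < s"
  shows "((u + v)/2) powr s \<le> u powr s + v powr s"
proof -
  have "(u+v)/2 \<le> max u v" by simp
  hence "((u + v)/2) powr s \<le> max u v powr s"
    using assms by (intro powr_mono2) auto
  also have "\<dots> \<le> u powr s + v powr s"
    by (simp add: max_def)
  finally show ?thesis .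
qed

lemma norm_phi_le:
  "cmod (phi_plus z q w) \<le> (inverse (cmod (aa z fst w q)) + inverse (cmod (aa z snd w q)))/2"
  "cmod (phi_minus z q w) \<le> (inverse (cmod (aa z fst w q)) + inverse (cmod (aa z snd w q)))/2"
proof -
  have h1: "cmod ((-1) / aa z fst w q + (-1) / aa z snd w q) \<le> inverse (cmod (aa z fst w q)) + inverse (cmod (aa z snd w q))"
    using norm_triangle_ineq[of "(-1) / aa z fst w q" "(-1) / aa z snd w q"] unfolding norm_m1_div .
  have h2: "cmod ((-1) / aa z fst w q - (-1) / aa z snd w q) \<le> inverse (cmod (aa z fst w q)) + inverse (cmod (aa z snd w q))"
    using norm_triangle_ineq4[of "(-1) / aa z fst w q" "(-1) / aa z snd w q"] unfolding norm_m1_div .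
  show "cmod (phi_plus z q w) \<le> (inverse (cmod (aa z fst w q)) + inverse (cmod (aa z snd w q)))/2"
    unfolding phi_plus_aa norm_mult using h1 by simp
  show "cmod (phi_minus z q w) \<le> (inverse (cmod (aa z fst w q)) + inverse (cmod (aa z snd w q)))/2"
    unfolding phi_minus_aa norm_mult using h2 by simp
qed

lemma WW_le:
  assumes "0 < s"
  shows "WW z s w q \<le> 2 * (inverse (cmod (aa z fst w q)) powr s + inverse (cmod (aa z snd w q)) powr s)"
proof -
  let ?u = "inverse (cmod (aa z fst w q))" and ?v = "inverse (cmod (aa z snd w q))"
  have "cmod (phi_plus z q w) powr s \<le> ((?u + ?v)/2) powr s"
    using norm_phi_le(1) assms by (intro powr_mono2) auto
  moreover have "cmod (phi_minus z q w) powr s \<le> ((?u + ?v)/2) powr s"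
    using norm_phi_le(2) assms by (intro powr_mono2) auto
  moreover have "((?u + ?v)/2) powr s \<le> ?u powr s + ?v powr s"
    using assms by (intro half_sum_powr) auto
  ultimately show ?thesis unfolding WW_def
    by (smt (verit))
qed

lemma inv_powr_le_psi:
  assumes "0 < s"
  shows "ennreal (inverse (cmod a) powr s) \<le> psi s (Re a)"
proof (cases "Re a = 0")
  case True thus ?thesis by (simp add: psi_def)
next
  case False
  hence pos: "0 < \<bar>Re a\<bar>" by simp
  have "\<bar>Re a\<bar> \<le> cmod a" by (rule abs_Re_le_cmod)
  hence "inverse (cmod a) \<le> inverse \<bar>Re a\<bar>" using pos by (intro le_imp_inverse_le) auto
  hence "inverse (cmod a) powr s \<le> inverse \<bar>Re a\<bar> powr s"
    using assms by (intro powr_mono2) auto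
  also have "\<dots> = \<bar>Re a\<bar> powr (-s)" using pos by (simp add: powr_minus inverse_powr)
  finally show ?thesis using False by (simp add: psi_def)
qed

lemma inv_powr_le_Im:
  assumes "0 < s" "0 < Im a"
  shows "inverse (cmod a) powr s \<le> Im a powr (-s)"
proof -
  have "Im a \<le> cmod a" using abs_Im_le_cmod[of a] assms by simp
  hence "inverse (cmod a) \<le> inverse (Im a)" using assms by (intro le_imp_inverse_le) auto
  hence "inverse (cmod a) powr s \<le> inverse (Im a) powr s"
    using assms by (intro powr_mono2) auto
  also have "\<dots> = Im a powr (-s)" using assms by (simp add: powr_minus inverse_powr)
  finally show ?thesis .
qed

lemma WW_psi:
  assumes "0 < s"
  shows "ennreal (WW z s w q) \<le> 2 * (psi s (Re (aa z fst w q)) + psi s (Re (aa z snd w q)))"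
proof -
  have "ennreal (WW z s w q) \<le> ennreal (2 * (inverse (cmod (aa z fst w q)) powr s + inverse (cmod (aa z snd w q)) powr s))"
    using WW_le[OF assms] by (rule ennreal_leI)
  also have "\<dots> = 2 * (ennreal (inverse (cmod (aa z fst w q)) powr s) + ennreal (inverse (cmod (aa z snd w q)) powr s))"
    by (simp add: ennreal_mult ennreal_plus)
  also have "\<dots> \<le> 2 * (psi s (Re (aa z fst w q)) + psi s (Re (aa z snd w q)))"
    using inv_powr_le_psi[OF assms] by (intro mult_left_mono add_mono) auto
  finally show ?thesis .
qed

lemma WW_Im:
  assumes "0 < s" "Im z = 0" "0 < Im w"
  shows "WW z s w q \<le> 4 * Im w powr (-s)"
proof -
  have "WW z s w q \<le> 2 * (inverse (cmod (aa z fst w q)) powr s + inverse (cmod (aa z snd w q)) powr s)"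
    by (rule WW_le[OF assms(1)])
  also have "\<dots> \<le> 2 * (Im w powr (-s) + Im w powr (-s))"
    using inv_powr_le_Im[OF assms(1), of "aa z fst w q"] inv_powr_le_Im[OF assms(1), of "aa z snd w q"]
      assms by (simp add: Im_aa)
  finally show ?thesis by simp
qed

lemma WW_nonneg: "0 \<le> WW z s w q" unfolding WW_def by simp



lemma affine_sqrt2:
  assumes [measurable]: "G \<in> borel_measurable borel"
  shows "(\<integral>\<^sup>+y. G (x - y / sqrt 2) \<partial>lborel) = ennreal (sqrt 2) * (\<integral>\<^sup>+t. G t \<partial>lborel)"
proof -
  have "(\<integral>\<^sup>+t. G t \<partial>lborel) = ennreal \<bar>-1/sqrt 2\<bar> * (\<integral>\<^sup>+y. G (x + (-1/sqrt 2) * y) \<partial>lborel)"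
    by (rule nn_integral_real_affine) auto
  also have "(\<lambda>y. G (x + (-1/sqrt 2) * y)) = (\<lambda>y. G (x - y / sqrt 2))"
    by (auto simp: field_simps)
  finally have "(\<integral>\<^sup>+t. G t \<partial>lborel) = ennreal (1/sqrt 2) * (\<integral>\<^sup>+y. G (x - y / sqrt 2) \<partial>lborel)"
    by simp
  hence "ennreal (sqrt 2) * (\<integral>\<^sup>+t. G t \<partial>lborel) = ennreal (sqrt 2) * ennreal (1/sqrt 2) * (\<integral>\<^sup>+y. G (x - y / sqrt 2) \<partial>lborel)"
    by (simp add: mult.assoc)
  also have "ennreal (sqrt 2) * ennreal (1/sqrt 2) = 1"
    by (simp flip: ennreal_mult)
  finally show ?thesis by simp
qed

lemma psi_measurable[measurable]: "psi s \<in> borel_measurable borel"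
  unfolding psi_def by measurable

lemma int_powr_half:
  assumes "0 < s" "s < 1" "0 \<le> \<eta>"
  shows "(\<integral>\<^sup>+t. ennreal (indicator {0..\<eta>} t * t powr (-s)) \<partial>lborel) = ennreal (\<eta> powr (1-s) / (1-s))"
proof -
  have "((\<lambda>x. x powr (-s)) has_integral (\<eta> powr (-s+1) / (-s+1))) {0..\<eta>}"
    using assms by (intro has_integral_powr_from_0) auto
  from nn_integral_has_integral_lebesgue[OF _ this]
  show ?thesis by (simp add: algebra_simps)
qed



definition Cc :: "real \<Rightarrow> real \<Rightarrow> real" where
  "Cc s \<eta> = 2 * (\<eta> powr (1-s) / (1-s))"

lemma psi_ind_int:
  assumes "0 < s" "s < 1" "0 \<le> \<eta>"
  shows "(\<integral>\<^sup>+t. psi s t * indicator {t. \<bar>t\<bar> \<le> \<eta>} t \<partial>lborel) \<le> ennreal (Cc s \<eta>)"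
proof -
  define g where "g t = ennreal (indicator {0..\<eta>} t * t powr (-s))" for t
  have gm[measurable]: "g \<in> borel_measurable borel" unfolding g_def by measurable
  have "(\<integral>\<^sup>+t. psi s t * indicator {t. \<bar>t\<bar> \<le> \<eta>} t \<partial>lborel) \<le> (\<integral>\<^sup>+t. g t + g (-t) \<partial>lborel)"
  proof (rule nn_integral_mono_AE)
    show "AE t in lborel. psi s t * indicator {t. \<bar>t\<bar> \<le> \<eta>} t \<le> g t + g (- t)"
      using AE_lborel_singleton[of 0]
    proof eventually_elim
      case (elim t)
      show ?case
      proof (cases "\<bar>t\<bar> \<le> \<eta>")
        case False thus ?thesis by simp
      next
        case True
        show ?thesis
        proof (cases "t > 0")
          case True
          thus ?thesis using elim \<open>\<bar>t\<bar> \<le> \<eta>\<close> by (simp add: psi_def g_def indicator_def)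
        next
          case False
          hence "t < 0" using elim by simp
          thus ?thesis using elim \<open>\<bar>t\<bar> \<le> \<eta>\<close> by (simp add: psi_def g_def indicator_def)
        qed
      qed
    qed
  qed
  also have "\<dots> = (\<integral>\<^sup>+t. g t \<partial>lborel) + (\<integral>\<^sup>+t. g (-t) \<partial>lborel)"
    by (rule nn_integral_add) auto
  also have "(\<integral>\<^sup>+t. g (-t) \<partial>lborel) = (\<integral>\<^sup>+t. g t \<partial>lborel)"
    using nn_integral_real_affine[OF gm, of "-1" 0] by simp
  also have "(\<integral>\<^sup>+t. g t \<partial>lborel) = ennreal (\<eta> powr (1-s) / (1-s))"
    unfolding g_def by (rule int_powr_half[OF assms])
  also have "ennreal (\<eta> powr (1-s) / (1-s)) + ennreal (\<eta> powr (1-s) / (1-s)) = ennreal (Cc s \<eta>)"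
    unfolding Cc_def using assms by (simp flip: ennreal_plus)
  finally show ?thesis .
qed

lemma Cc_nonneg: "s < 1 \<Longrightarrow> 0 \<le> Cc s \<eta>" unfolding Cc_def by simp

lemma psi_split:
  assumes "0 < s" "0 < \<eta>"
  shows "psi s t \<le> psi s t * indicator {t. \<bar>t\<bar> \<le> \<eta>} t + ennreal (\<eta> powr (-s))"
proof (cases "\<bar>t\<bar> \<le> \<eta>")
  case True thus ?thesis by simp
next
  case False
  hence "t \<noteq> 0" "\<eta> < \<bar>t\<bar>" using assms by auto
  hence "\<bar>t\<bar> powr (-s) \<le> \<eta> powr (-s)"
    using assms by (intro powr_mono2') auto
  thus ?thesis using \<open>t \<noteq> 0\<close> False by (simp add: psi_def)
qed



lemma fst_bm[measurable]: "(fst :: real\<times>real \<Rightarrow> real) \<in> borel_measurable borel"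
  by (intro borel_measurable_continuous_onI continuous_intros)
lemma snd_bm[measurable]: "(snd :: real\<times>real \<Rightarrow> real) \<in> borel_measurable borel"
  by (intro borel_measurable_continuous_onI continuous_intros)

locale DB = prob_space M for M :: "(real \<times> real) measure" +
  fixes D :: real
  assumes sets_M: "sets M = sets borel" and D_nn: "0 \<le> D"
  and P: "\<And>H p. H \<in> borel_measurable borel \<Longrightarrow> p = fst \<or> p = snd \<Longrightarrow>
      (\<integral>\<^sup>+q. H (p q) \<partial>M) \<le> ennreal D * (\<integral>\<^sup>+y. H y \<partial>lborel)"
begin

lemma meas_M: "measurable M N = measurable borel N"
  by (rule measurable_cong_sets[OF sets_M refl])

lemma sets_M_iff: "A \<in> sets M \<longleftrightarrow> A \<in> sets borel"
  using sets_M by simp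

lemma p_meas: "p = fst \<or> p = snd \<Longrightarrow> p \<in> borel_measurable M"
  unfolding meas_M by auto

lemma space_M[simp]: "space M = UNIV"
  using sets_eq_imp_space_eq[OF sets_M] by simp

lemma GL:
  assumes p: "p = fst \<or> p = snd" and s: "0 < s" "s < 1" and eta: "0 < \<eta>" and S: "S \<in> sets M"
  shows "(\<integral>\<^sup>+q. psi s (x - p q / sqrt 2) * indicator S q \<partial>M)
     \<le> ennreal (D * sqrt 2 * Cc s \<eta>) + ennreal (\<eta> powr (-s)) * emeasure M S"
proof -
  define G where "G t = psi s t * indicator {t. \<bar>t\<bar> \<le> \<eta>} t" for t
  have Gm[measurable]: "G \<in> borel_measurable borel" unfolding G_def by measurable
  have pm[measurable]: "p \<in> borel_measurable borel" using p by auto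
  have "(\<integral>\<^sup>+q. psi s (x - p q / sqrt 2) * indicator S q \<partial>M)
      \<le> (\<integral>\<^sup>+q. G (x - p q / sqrt 2) + ennreal (\<eta> powr (-s)) * indicator S q \<partial>M)"
  proof (rule nn_integral_mono)
    fix q
    have "psi s (x - p q / sqrt 2) \<le> G (x - p q / sqrt 2) + ennreal (\<eta> powr (-s))"
      unfolding G_def by (rule psi_split[OF s(1) eta])
    thus "psi s (x - p q / sqrt 2) * indicator S q \<le> G (x - p q / sqrt 2) + ennreal (\<eta> powr (-s)) * indicator S q"
      by (cases "q \<in> S") auto
  qed
  also have "\<dots> = (\<integral>\<^sup>+q. G (x - p q / sqrt 2) \<partial>M) + ennreal (\<eta> powr (-s)) * emeasure M S"
    using S by (subst nn_integral_add) (auto simp: meas_M sets_M_iff nn_integral_cmult_indicator)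
  also have "(\<integral>\<^sup>+q. G (x - p q / sqrt 2) \<partial>M) \<le> ennreal D * (\<integral>\<^sup>+y. G (x - y / sqrt 2) \<partial>lborel)"
    by (rule P[OF _ p]) measurable
  also have "\<dots> = ennreal D * (ennreal (sqrt 2) * (\<integral>\<^sup>+t. G t \<partial>lborel))"
    by (simp add: affine_sqrt2)
  also have "\<dots> \<le> ennreal D * (ennreal (sqrt 2) * ennreal (Cc s \<eta>))"
    unfolding G_def using psi_ind_int[OF s] eta by (intro mult_left_mono) auto
  also have "\<dots> = ennreal (D * sqrt 2 * Cc s \<eta>)"
    using D_nn Cc_nonneg[OF s(2)] by (simp add: ennreal_mult mult.assoc)
  finally show ?thesis by (simp add: add_right_mono)
qed

lemma MLb:
  assumes p: "p = fst \<or> p = snd" and d: "0 \<le> \<delta>"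
  shows "emeasure M {q. \<bar>x - p q / sqrt 2\<bar> \<le> \<delta>} \<le> ennreal (D * (2 * sqrt 2 * \<delta>))"
proof -
  define G :: "real \<Rightarrow> ennreal" where "G t = indicator {-\<delta>..\<delta>} t" for t
  have Gm[measurable]: "G \<in> borel_measurable borel" unfolding G_def by measurable
  have pm[measurable]: "p \<in> borel_measurable borel" using p by auto
  have "emeasure M {q. \<bar>x - p q / sqrt 2\<bar> \<le> \<delta>} = (\<integral>\<^sup>+q. G (x - p q / sqrt 2) \<partial>M)"
  proof -
    have "{q. \<bar>x - p q / sqrt 2\<bar> \<le> \<delta>} \<in> sets borel" by measurable
    hence "emeasure M {q. \<bar>x - p q / sqrt 2\<bar> \<le> \<delta>} = (\<integral>\<^sup>+q. indicator {q. \<bar>x - p q / sqrt 2\<bar> \<le> \<delta>} q \<partial>M)"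
      by (simp add: sets_M_iff)
    also have "\<dots> = (\<integral>\<^sup>+q. G (x - p q / sqrt 2) \<partial>M)"
      by (intro nn_integral_cong) (auto simp: G_def split: split_indicator)
    finally show ?thesis .
  qed
  also have "\<dots> \<le> ennreal D * (\<integral>\<^sup>+y. G (x - y / sqrt 2) \<partial>lborel)"
    by (rule P[OF _ p]) measurable
  also have "\<dots> = ennreal D * (ennreal (sqrt 2) * (2 * \<delta>))"
    using d by (simp add: affine_sqrt2 G_def)
  also have "\<dots> = ennreal (D * (2 * sqrt 2 * \<delta>))"
    using D_nn d by (simp add: ennreal_mult mult.assoc mult.left_commute)
  finally show ?thesis .
qed

end


lemma Hc_closed: "closed Hc"
  unfolding Hc_def by (rule closed_halfspace_Im_ge)

lemma Hc_sets[measurable]: "Hc \<in> sets borel"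
  using Hc_closed by (rule borel_closed)

lemma m1_div_Hc: "Im a \<ge> 0 \<Longrightarrow> Im (1 / a) \<le> 0"
  by (simp add: Im_divide)

lemma phi_plus_Hc:
  assumes "Im z = 0" "w \<in> Hc"
  shows "phi_plus z q w \<in> Hc"
proof -
  have "Im (aa z fst w q) \<ge> 0" "Im (aa z snd w q) \<ge> 0"
    using assms by (auto simp: Im_aa Hc_def)
  hence "Im (1 / aa z fst w q) \<le> 0" "Im (1 / aa z snd w q) \<le> 0"
    by (auto intro: m1_div_Hc)
  thus ?thesis unfolding phi_plus_aa Hc_def by simp
qed

lemma cspace_bounded:
  assumes "f \<in> Cspace"
  shows "\<exists>B. \<forall>w\<in>Hc. cmod (f w) \<le> B"
proof -
  from assms obtain L where cont: "continuous_on Hc f"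
    and lim: "(f \<longlongrightarrow> L) (inf at_infinity (principal Hc))"
    unfolding Cspace_def by blast
  have "eventually (\<lambda>w. dist (f w) L < 1) (inf at_infinity (principal Hc))"
    using lim by (rule tendstoD) simp
  hence "eventually (\<lambda>w. w \<in> Hc \<longrightarrow> dist (f w) L < 1) at_infinity"
    by (simp add: eventually_inf_principal)
  then obtain R where R: "\<And>w. norm w \<ge> R \<Longrightarrow> w \<in> Hc \<longrightarrow> dist (f w) L < 1"
    unfolding eventually_at_infinity by blast
  have "compact (Hc \<inter> cball 0 R)"
    using Hc_closed by (intro closed_Int_compact) auto
  moreover have "continuous_on (Hc \<inter> cball 0 R) f"
    using cont by (rule continuous_on_subset) auto
  ultimately have "bounded (f ` (Hc \<inter> cball 0 R))"
    by (intro compact_imp_bounded compact_continuous_image)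
  then obtain B1 where B1: "\<And>w. w \<in> Hc \<inter> cball 0 R \<Longrightarrow> cmod (f w) \<le> B1"
    unfolding bounded_iff by blast
  show ?thesis
  proof (intro exI ballI)
    fix w assume w: "w \<in> Hc"
    show "cmod (f w) \<le> max B1 (cmod L + 1)"
    proof (cases "norm w \<le> R")
      case True thus ?thesis using B1[of w] w by auto
    next
      case False
      hence "dist (f w) L < 1" using R[of w] w by auto
      hence "cmod (f w) \<le> cmod L + 1"
        using norm_triangle_ineq2[of "f w" L] by (simp add: dist_norm)
      thus ?thesis by simp
    qed
  qed
qed

lemma cspace_le_supnorm:
  assumes "f \<in> Cspace" "w \<in> Hc"
  shows "cmod (f w) \<le> supnorm f"
proof -
  obtain B where "\<forall>w\<in>Hc. cmod (f w) \<le> B" using cspace_bounded[OF assms(1)] by blast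
  hence "bdd_above ((\<lambda>w. cmod (f w)) ` Hc)" by (auto intro: bdd_aboveI2)
  thus ?thesis unfolding supnorm_def by (rule cSUP_upper[OF assms(2)])
qed

lemma Hc_ne: "0 \<in> Hc" unfolding Hc_def by simp

lemma supnorm_nonneg: "f \<in> Cspace \<Longrightarrow> 0 \<le> supnorm f"
  using cspace_le_supnorm[OF _ Hc_ne, of f] by (meson norm_ge_zero order_trans)

lemma supnorm_le:
  assumes "\<And>w. w \<in> Hc \<Longrightarrow> cmod (g w) \<le> c"
  shows "supnorm g \<le> c"
  unfolding supnorm_def using Hc_ne assms by (intro cSUP_least) auto

lemma hh_meas[measurable]: "(\<lambda>t::real. (-1::complex) / (w + (z - complex_of_real t) / sqrt 2)) \<in> borel_measurable borel"
  by measurable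

lemma phi_plus_meas[measurable]: "(\<lambda>q. phi_plus z q w) \<in> borel_measurable borel"
proof -
  have "(\<lambda>q::real\<times>real. (-1::complex) / (w + (z - complex_of_real (fst q)) / sqrt 2)) \<in> borel_measurable borel"
    using measurable_compose[OF fst_bm hh_meas] by (simp add: o_def)
  moreover have "(\<lambda>q::real\<times>real. (-1::complex) / (w + (z - complex_of_real (snd q)) / sqrt 2)) \<in> borel_measurable borel"
    using measurable_compose[OF snd_bm hh_meas] by (simp add: o_def)
  ultimately show ?thesis unfolding phi_plus_def by measurable
qed

lemma phi_minus_meas[measurable]: "(\<lambda>q. phi_minus z q w) \<in> borel_measurable borel"
proof -
  have "(\<lambda>q::real\<times>real. (-1::complex) / (w + (z - complex_of_real (fst q)) / sqrt 2)) \<in> borel_measurable borel"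
    using measurable_compose[OF fst_bm hh_meas] by (simp add: o_def)
  moreover have "(\<lambda>q::real\<times>real. (-1::complex) / (w + (z - complex_of_real (snd q)) / sqrt 2)) \<in> borel_measurable borel"
    using measurable_compose[OF snd_bm hh_meas] by (simp add: o_def)
  ultimately show ?thesis unfolding phi_minus_def by measurable
qed

lemma WW_meas[measurable]: "WW z s w \<in> borel_measurable borel"
  unfolding WW_def by measurable

lemma T_integrand_meas:
  assumes "f \<in> Cspace" "Im z = 0" "w \<in> Hc"
  shows "T_integrand z s f w \<in> borel_measurable borel"
proof -
  define f' where "f' x = (if x \<in> Hc then f x else 0)" for x
  have "continuous_on Hc f" using assms(1) unfolding Cspace_def by blast
  hence [measurable]: "f' \<in> borel_measurable borel"
    unfolding f'_def by (intro borel_measurable_continuous_on_if) auto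
  have "T_integrand z s f w = (\<lambda>q. f' (phi_plus z q w) * complex_of_real (WW z s w q))"
    using phi_plus_Hc[OF assms(2,3)] by (auto simp: T_integrand_def f'_def WW_def)
  also have "\<dots> \<in> borel_measurable borel" by measurable
  finally show ?thesis .
qed



lemma norm_integral_le_nn:
  fixes g :: "'a \<Rightarrow> 'b::{banach,second_countable_topology}"
  assumes "integrable N g" "(\<integral>\<^sup>+q. ennreal (norm (g q)) \<partial>N) \<le> ennreal c" "0 \<le> c"
  shows "norm (integral\<^sup>L N g) \<le> c"
proof -
  have "integrable N (\<lambda>q. norm (g q))" using assms(1) by auto
  hence "(\<integral>\<^sup>+q. ennreal (norm (g q)) \<partial>N) = ennreal (\<integral>q. norm (g q) \<partial>N)"
    by (intro nn_integral_eq_integral) auto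
  with assms(2,3) have "(\<integral>q. norm (g q) \<partial>N) \<le> c" by simp
  thus ?thesis using integral_norm_bound[of N g] by linarith
qed

context DB begin

lemma em_UNIV[simp]: "emeasure M UNIV = 1"
  using emeasure_space_1 by simp

lemma psi_tot:
  assumes p: "p = fst \<or> p = snd" and s: "0 < s" "s < 1" and eta: "0 < \<eta>" and R: "0 < R"
  shows "(\<integral>\<^sup>+q. psi s (x - p q / sqrt 2) \<partial>M)
     \<le> ennreal (D * sqrt 2 * Cc s \<eta>) + ennreal (\<eta> powr (-s)) * emeasure M {q. \<bar>x - p q / sqrt 2\<bar> \<le> R}
        + ennreal (R powr (-s))"
proof -
  have pm[measurable]: "p \<in> borel_measurable borel" using p by auto
  define S where "S = {q. \<bar>x - p q / sqrt 2\<bar> \<le> R}"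
  have S: "S \<in> sets M" unfolding S_def sets_M_iff by measurable
  have "(\<integral>\<^sup>+q. psi s (x - p q / sqrt 2) \<partial>M)
      \<le> (\<integral>\<^sup>+q. psi s (x - p q / sqrt 2) * indicator S q + ennreal (R powr (-s)) \<partial>M)"
  proof (rule nn_integral_mono)
    fix q
    have "psi s (x - p q / sqrt 2) \<le> psi s (x - p q / sqrt 2) * indicator {t. \<bar>t\<bar> \<le> R} (x - p q / sqrt 2) + ennreal (R powr (-s))"
      by (rule psi_split[OF s(1) R])
    thus "psi s (x - p q / sqrt 2) \<le> psi s (x - p q / sqrt 2) * indicator S q + ennreal (R powr (-s))"
      by (simp add: S_def indicator_def)
  qed
  also have "\<dots> = (\<integral>\<^sup>+q. psi s (x - p q / sqrt 2) * indicator S q \<partial>M) + ennreal (R powr (-s))"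
    using S by (subst nn_integral_add) (auto simp: meas_M sets_M_iff emeasure_space_1)
  also have "\<dots> \<le> ennreal (D * sqrt 2 * Cc s \<eta>) + ennreal (\<eta> powr (-s)) * emeasure M S + ennreal (R powr (-s))"
    by (intro add_right_mono GL[OF p s eta S])
  finally show ?thesis unfolding S_def .
qed

lemma psi_main:
  assumes p: "p = fst \<or> p = snd" and s: "0 < s" "s < 1" and R: "0 < R"
  shows "(\<integral>\<^sup>+q. psi s (x - p q / sqrt 2) \<partial>M) \<le> ennreal (D * sqrt 2 * Cc s R + 2 * R powr (-s))"
proof -
  have "(\<integral>\<^sup>+q. psi s (x - p q / sqrt 2) \<partial>M)
     \<le> ennreal (D * sqrt 2 * Cc s R) + ennreal (R powr (-s)) * emeasure M {q. \<bar>x - p q / sqrt 2\<bar> \<le> R}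
        + ennreal (R powr (-s))" by (rule psi_tot[OF p s R R])
  also have "\<dots> \<le> ennreal (D * sqrt 2 * Cc s R) + ennreal (R powr (-s)) * 1 + ennreal (R powr (-s))"
    by (intro add_mono mult_left_mono order_refl) (auto simp: emeasure_le_1)
  also have "\<dots> = ennreal (D * sqrt 2 * Cc s R + 2 * R powr (-s))"
    using D_nn Cc_nonneg[OF s(2)] by (simp flip: ennreal_plus)
  finally show ?thesis .
qed

lemma Re_aa': "Im z = 0 \<Longrightarrow> Re (aa z p w q) = (Re w + Re z / sqrt 2) - p q / sqrt 2"
  by (simp add: Re_aa diff_divide_distrib)

lemma WW_int:
  assumes z: "Im z = 0" and s: "0 < s" "s < 1"
  shows "(\<integral>\<^sup>+q. ennreal (WW z s w q) \<partial>M)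
    \<le> 2 * ((\<integral>\<^sup>+q. psi s ((Re w + Re z / sqrt 2) - fst q / sqrt 2) \<partial>M)
          + (\<integral>\<^sup>+q. psi s ((Re w + Re z / sqrt 2) - snd q / sqrt 2) \<partial>M))"
proof -
  have "(\<integral>\<^sup>+q. ennreal (WW z s w q) \<partial>M)
    \<le> (\<integral>\<^sup>+q. 2 * (psi s ((Re w + Re z / sqrt 2) - fst q / sqrt 2) + psi s ((Re w + Re z / sqrt 2) - snd q / sqrt 2)) \<partial>M)"
  proof (rule nn_integral_mono)
    fix q
    show "ennreal (WW z s w q) \<le> 2 * (psi s ((Re w + Re z / sqrt 2) - fst q / sqrt 2) + psi s ((Re w + Re z / sqrt 2) - snd q / sqrt 2))"
      using WW_psi[OF s(1), of z w q] unfolding Re_aa'[OF z] .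
  qed
  also have "\<dots> = 2 * ((\<integral>\<^sup>+q. psi s ((Re w + Re z / sqrt 2) - fst q / sqrt 2) \<partial>M)
          + (\<integral>\<^sup>+q. psi s ((Re w + Re z / sqrt 2) - snd q / sqrt 2) \<partial>M))"
    by (subst nn_integral_cmult, simp add: meas_M, subst nn_integral_add) (auto simp: meas_M)
  finally show ?thesis .
qed

lemma WW_main:
  assumes z: "Im z = 0" and s: "0 < s" "s < 1" and R: "0 < R"
  shows "(\<integral>\<^sup>+q. ennreal (WW z s w q) \<partial>M) \<le> ennreal (4 * (D * sqrt 2 * Cc s R + 2 * R powr (-s)))"
proof -
  let ?c = "D * sqrt 2 * Cc s R + 2 * R powr (-s)"
  have "(\<integral>\<^sup>+q. ennreal (WW z s w q) \<partial>M) \<le> 2 * (ennreal ?c + ennreal ?c)"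
    using WW_int[OF z s, of w] psi_main[OF _ s R, of fst] psi_main[OF _ s R, of snd]
    by (meson add_mono mult_left_mono order_trans zero_le)
  also have "\<dots> = ennreal 4 * ennreal ?c"
    by (simp add: algebra_simps flip: mult_2)
  also have "\<dots> = ennreal (4 * ?c)"
    using D_nn Cc_nonneg[OF s(2)] by (simp add: ennreal_mult)
  finally show ?thesis .
qed

lemma WW_finite:
  assumes z: "Im z = 0" and s: "0 < s" "s < 1"
  shows "(\<integral>\<^sup>+q. ennreal (WW z s w q) \<partial>M) < \<infinity>"
  using order_le_less_trans[OF WW_main[OF z s zero_less_one, of w] ennreal_less_top] by simp

lemma norm_T_integrand:
  assumes f: "f \<in> Cspace" and z: "Im z = 0" and w: "w \<in> Hc"
  shows "norm (T_integrand z s f w q) \<le> supnorm f * WW z s w q"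
  unfolding T_integrand_def norm_mult WW_def[symmetric]
  using cspace_le_supnorm[OF f phi_plus_Hc[OF z w]] WW_nonneg[of z s w q]
  by (simp add: mult_right_mono)

lemma T_integrable:
  assumes f: "f \<in> Cspace" and z: "Im z = 0" and w: "w \<in> Hc" and s: "0 < s" "s < 1"
  shows "integrable M (T_integrand z s f w)"
proof (rule integrableI_bounded)
  show "T_integrand z s f w \<in> borel_measurable M"
    unfolding meas_M by (rule T_integrand_meas[OF f z w])
  have "(\<integral>\<^sup>+q. ennreal (norm (T_integrand z s f w q)) \<partial>M) \<le> (\<integral>\<^sup>+q. ennreal (supnorm f) * ennreal (WW z s w q) \<partial>M)"
    using norm_T_integrand[OF f z w] supnorm_nonneg[OF f]
    by (intro nn_integral_mono) (simp add: ennreal_mult[symmetric] WW_nonneg)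
  also have "\<dots> = ennreal (supnorm f) * (\<integral>\<^sup>+q. ennreal (WW z s w q) \<partial>M)"
    by (rule nn_integral_cmult) (simp add: meas_M)
  also have "\<dots> < \<infinity>" using WW_finite[OF z s, of w] by (simp add: ennreal_mult_less_top)
  finally show "(\<integral>\<^sup>+q. ennreal (norm (T_integrand z s f w q)) \<partial>M) < \<infinity>" .
qed

end


lemma mu_law_facts:
  assumes A: "Assumptions2 nu sg s0 s1 K Bnu B0 B1" and k: "0 < \<kappa>"
  shows "DB (mu_law nu sg \<kappa>) (max B0 B1 / \<kappa>)"
proof -
  let ?N = "density lborel nu"
  from A have nu[measurable]: "nu \<in> borel_measurable borel" and pN: "prob_space ?N"
    and psg: "prob_space sg" and ssg: "sets sg = sets borel"
    and s0[measurable]: "s0 \<in> borel_measurable borel" and s0b: "\<And>x. 0 \<le> s0 x \<and> s0 x \<le> B0"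
    and s1[measurable]: "s1 \<in> borel_measurable borel" and s1b: "\<And>x. 0 \<le> s1 x \<and> s1 x \<le> B1"
    and d0: "distr sg lborel fst = density lborel s0"
    and d1: "distr sg lborel snd = density lborel s1"
    unfolding Assumptions2_def by auto
  have B0: "0 \<le> B0" using s0b[of 0] by linarith
  have B1: "0 \<le> B1" using s1b[of 0] by linarith
  have msg: "measurable sg X = measurable borel X" for X
    by (rule measurable_cong_sets[OF ssg refl])
  have sets_prod: "sets (?N \<Otimes>\<^sub>M sg) = sets (borel \<Otimes>\<^sub>M (borel :: (real\<times>real) measure))"
    by (rule sets_pair_measure_cong) (auto simp: ssg)
  have mprod: "measurable (?N \<Otimes>\<^sub>M sg) X = measurable (borel \<Otimes>\<^sub>M (borel :: (real\<times>real) measure)) X" for X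
    by (rule measurable_cong_sets[OF sets_prod refl])
  define T where "T = (\<lambda>(r::real, p::real\<times>real). (r + \<kappa> * fst p, r + \<kappa> * snd p))"
  have Tm: "T \<in> measurable (?N \<Otimes>\<^sub>M sg) borel"
    unfolding mprod T_def by measurable
  have mu: "mu_law nu sg \<kappa> = distr (?N \<Otimes>\<^sub>M sg) borel T"
    unfolding mu_law_def T_def ..
  interpret N: prob_space ?N by (rule pN)
  interpret SG: prob_space sg by (rule psg)
  interpret NS: pair_prob_space ?N sg by unfold_locales
  have pmu: "prob_space (mu_law nu sg \<kappa>)"
    unfolding mu by (rule NS.P.prob_space_distr[OF Tm])
  show ?thesis
  proof (rule DB.intro[OF pmu], unfold_locales)
    show "sets (mu_law nu sg \<kappa>) = sets borel" unfolding mu by simp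
    show "0 \<le> max B0 B1 / \<kappa>" using B0 k by simp
    fix H :: "real \<Rightarrow> ennreal" and p :: "real\<times>real \<Rightarrow> real"
    assume Hm[measurable]: "H \<in> borel_measurable borel" and p: "p = fst \<or> p = snd"
    obtain sj and Bj :: real where sj[measurable]: "sj \<in> borel_measurable borel" and sjb: "\<And>x. 0 \<le> sj x \<and> sj x \<le> Bj"
      and dj: "distr sg lborel p = density lborel sj" and Bj: "Bj \<le> max B0 B1" "0 \<le> Bj"
    proof -
      from p show ?thesis
      proof
        assume "p = fst" thus ?thesis using that[of s0 B0] s0b d0 B0 by auto
      next
        assume "p = snd" thus ?thesis using that[of s1 B1] s1b d1 B1 by auto
      qed
    qed
    have pm[measurable]: "p \<in> borel_measurable borel" using p by auto
    have inner: "(\<integral>\<^sup>+x. H (r + \<kappa> * p x) \<partial>sg) \<le> ennreal (Bj / \<kappa>) * (\<integral>\<^sup>+y. H y \<partial>lborel)" for r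
    proof -
      have "(\<integral>\<^sup>+x. H (r + \<kappa> * p x) \<partial>sg) = (\<integral>\<^sup>+t. H (r + \<kappa> * t) \<partial>distr sg lborel p)"
        by (subst nn_integral_distr) (auto simp: msg)
      also have "\<dots> = (\<integral>\<^sup>+t. ennreal (sj t) * H (r + \<kappa> * t) \<partial>lborel)"
        unfolding dj by (subst nn_integral_density) auto
      also have "\<dots> \<le> (\<integral>\<^sup>+t. ennreal Bj * H (r + \<kappa> * t) \<partial>lborel)"
        using sjb by (intro nn_integral_mono mult_right_mono ennreal_leI) auto
      also have "\<dots> = ennreal Bj * (\<integral>\<^sup>+t. H (r + \<kappa> * t) \<partial>lborel)"
        by (rule nn_integral_cmult) auto
      also have "(\<integral>\<^sup>+t. H (r + \<kappa> * t) \<partial>lborel) = ennreal (1/\<kappa>) * (\<integral>\<^sup>+y. H y \<partial>lborel)"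
      proof -
        have "(\<integral>\<^sup>+y. H y \<partial>lborel) = ennreal \<bar>\<kappa>\<bar> * (\<integral>\<^sup>+t. H (r + \<kappa> * t) \<partial>lborel)"
          using k by (intro nn_integral_real_affine) auto
        hence "ennreal (1/\<kappa>) * (\<integral>\<^sup>+y. H y \<partial>lborel) = ennreal (1/\<kappa>) * ennreal \<kappa> * (\<integral>\<^sup>+t. H (r + \<kappa> * t) \<partial>lborel)"
          using k by (simp add: mult.assoc)
        also have "ennreal (1/\<kappa>) * ennreal \<kappa> = 1" using k by (simp flip: ennreal_mult)
        finally show ?thesis by simp
      qed
      also have "ennreal Bj * (ennreal (1/\<kappa>) * (\<integral>\<^sup>+y. H y \<partial>lborel)) = ennreal (Bj / \<kappa>) * (\<integral>\<^sup>+y. H y \<partial>lborel)"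
      proof -
        have "ennreal Bj * ennreal (1/\<kappa>) = ennreal (Bj / \<kappa>)"
          using k Bj ennreal_mult[of Bj "1/\<kappa>"] by simp
        thus ?thesis by (simp add: mult.assoc[symmetric])
      qed
      finally show ?thesis .
    qed
    have "(\<integral>\<^sup>+q. H (p q) \<partial>mu_law nu sg \<kappa>) = (\<integral>\<^sup>+x. H (p (T x)) \<partial>(?N \<Otimes>\<^sub>M sg))"
      unfolding mu by (subst nn_integral_distr[OF Tm]) (auto)
    also have "\<dots> = (\<integral>\<^sup>+r. \<integral>\<^sup>+x. H (p (T (r, x))) \<partial>sg \<partial>?N)"
    proof -
      have HTm: "(\<lambda>x. H (p (T x))) \<in> borel_measurable (?N \<Otimes>\<^sub>M sg)"
        unfolding mprod T_def by measurable
      show ?thesis by (rule SG.nn_integral_fst[symmetric, OF HTm])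
    qed
    also have "\<dots> = (\<integral>\<^sup>+r. \<integral>\<^sup>+x. H (r + \<kappa> * p x) \<partial>sg \<partial>?N)"
      using p by (auto simp: T_def)
    also have "\<dots> \<le> (\<integral>\<^sup>+r. ennreal (Bj / \<kappa>) * (\<integral>\<^sup>+y. H y \<partial>lborel) \<partial>?N)"
      by (intro nn_integral_mono inner)
    also have "\<dots> = ennreal (Bj / \<kappa>) * (\<integral>\<^sup>+y. H y \<partial>lborel)"
      using N.emeasure_space_1 by simp
    also have "\<dots> \<le> ennreal (max B0 B1 / \<kappa>) * (\<integral>\<^sup>+y. H y \<partial>lborel)"
      using Bj k by (intro mult_right_mono ennreal_leI divide_right_mono) auto
    finally show "(\<integral>\<^sup>+q. H (p q) \<partial>mu_law nu sg \<kappa>) \<le> ennreal (max B0 B1 / \<kappa>) * (\<integral>\<^sup>+y. H y \<partial>lborel)" .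
  qed
qed



lemma ennreal_8: "2 * ((a::ennreal) + a + a + a) = ennreal 8 * a"
proof -
  have "2 * (a + a + a + a) = a * (2 + 2 + 2 + 2)" by (simp only: distrib_left distrib_right mult.commute)
  also have "(2 + 2 + 2 + 2 :: ennreal) = 8" by simp
  finally show ?thesis by (simp add: mult.commute)
qed

context DB begin

definition Ac :: "real \<Rightarrow> real \<Rightarrow> (real\<times>real) set" where
  "Ac x0 \<delta> = {q. \<bar>x0 - fst q / sqrt 2\<bar> \<le> \<delta>} \<union> {q. \<bar>x0 - snd q / sqrt 2\<bar> \<le> \<delta>}"

lemma Ac_sets[measurable]: "Ac x0 \<delta> \<in> sets borel"
  unfolding Ac_def by measurable

lemma psi_B:
  assumes p: "p = fst \<or> p = snd" and p': "p' = fst \<or> p' = snd" and s: "0 < s" "s < 1"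
    and eta: "0 < \<eta>" and d: "0 \<le> \<delta>"
  shows "(\<integral>\<^sup>+q. psi s (x - p q / sqrt 2) * indicator {q. \<bar>x0 - p' q / sqrt 2\<bar> \<le> \<delta>} q \<partial>M)
    \<le> ennreal (D * sqrt 2 * Cc s \<eta> + \<eta> powr (-s) * (D * (2 * sqrt 2 * \<delta>)))"
proof -
  have pm[measurable]: "p' \<in> borel_measurable borel" using p' by auto
  have S: "{q. \<bar>x0 - p' q / sqrt 2\<bar> \<le> \<delta>} \<in> sets M" unfolding sets_M_iff by measurable
  have "(\<integral>\<^sup>+q. psi s (x - p q / sqrt 2) * indicator {q. \<bar>x0 - p' q / sqrt 2\<bar> \<le> \<delta>} q \<partial>M)
     \<le> ennreal (D * sqrt 2 * Cc s \<eta>) + ennreal (\<eta> powr (-s)) * emeasure M {q. \<bar>x0 - p' q / sqrt 2\<bar> \<le> \<delta>}"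
    by (rule GL[OF p s eta S])
  also have "\<dots> \<le> ennreal (D * sqrt 2 * Cc s \<eta>) + ennreal (\<eta> powr (-s)) * ennreal (D * (2 * sqrt 2 * \<delta>))"
    by (intro add_mono order_refl mult_left_mono MLb[OF p' d]) auto
  also have "\<dots> = ennreal (D * sqrt 2 * Cc s \<eta> + \<eta> powr (-s) * (D * (2 * sqrt 2 * \<delta>)))"
    using D_nn d Cc_nonneg[OF s(2)] by (simp add: ennreal_mult ennreal_plus)
  finally show ?thesis .
qed

lemma WW_Ac:
  assumes z: "Im z = 0" and s: "0 < s" "s < 1" and eta: "0 < \<eta>" and d: "0 \<le> \<delta>"
  shows "(\<integral>\<^sup>+q. ennreal (WW z s w q) * indicator (Ac x0 \<delta>) q \<partial>M)
    \<le> ennreal (8 * (D * sqrt 2 * Cc s \<eta> + \<eta> powr (-s) * (D * (2 * sqrt 2 * \<delta>))))"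
proof -
  let ?x = "Re w + Re z / sqrt 2"
  let ?c = "D * sqrt 2 * Cc s \<eta> + \<eta> powr (-s) * (D * (2 * sqrt 2 * \<delta>))"
  define B1 :: "(real\<times>real) set" where "B1 = {q. \<bar>x0 - fst q / sqrt 2\<bar> \<le> \<delta>}"
  define B2 :: "(real\<times>real) set" where "B2 = {q. \<bar>x0 - snd q / sqrt 2\<bar> \<le> \<delta>}"
  have [measurable]: "B1 \<in> sets borel" "B2 \<in> sets borel" unfolding B1_def B2_def by measurable
  let ?P1 = "\<lambda>q. psi s (?x - fst q / sqrt 2)" and ?P2 = "\<lambda>q. psi s (?x - snd q / sqrt 2)"
  have "(\<integral>\<^sup>+q. ennreal (WW z s w q) * indicator (Ac x0 \<delta>) q \<partial>M)
     \<le> (\<integral>\<^sup>+q. 2 * (?P1 q * indicator B1 q + ?P1 q * indicator B2 q + ?P2 q * indicator B1 q + ?P2 q * indicator B2 q) \<partial>M)"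
  proof (rule nn_integral_mono)
    fix q
    have W: "ennreal (WW z s w q) \<le> 2 * (?P1 q + ?P2 q)"
      using WW_psi[OF s(1), of z w q] unfolding Re_aa'[OF z] .
    have I: "indicator (Ac x0 \<delta>) q \<le> (indicator B1 q + indicator B2 q :: ennreal)"
      unfolding Ac_def B1_def B2_def by (auto split: split_indicator)
    have "ennreal (WW z s w q) * indicator (Ac x0 \<delta>) q \<le> 2 * (?P1 q + ?P2 q) * (indicator B1 q + indicator B2 q)"
      by (intro mult_mono W I) auto
    thus "ennreal (WW z s w q) * indicator (Ac x0 \<delta>) q
       \<le> 2 * (?P1 q * indicator B1 q + ?P1 q * indicator B2 q + ?P2 q * indicator B1 q + ?P2 q * indicator B2 q)"
      by (simp add: algebra_simps)
  qed
  also have "\<dots> = 2 * ((\<integral>\<^sup>+q. ?P1 q * indicator B1 q \<partial>M) + (\<integral>\<^sup>+q. ?P1 q * indicator B2 q \<partial>M)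
      + (\<integral>\<^sup>+q. ?P2 q * indicator B1 q \<partial>M) + (\<integral>\<^sup>+q. ?P2 q * indicator B2 q \<partial>M))"
    by (simp add: nn_integral_cmult nn_integral_add meas_M)
  also have "\<dots> \<le> 2 * (ennreal ?c + ennreal ?c + ennreal ?c + ennreal ?c)"
    unfolding B1_def B2_def
    by (intro mult_left_mono add_mono psi_B[OF _ _ s eta d]) auto
  also have "\<dots> = ennreal 8 * ennreal ?c"
    by (rule ennreal_8)
  also have "\<dots> = ennreal (8 * ?c)"
    by (rule ennreal_mult[symmetric]) (use D_nn d Cc_nonneg[OF s(2)] in auto)
  finally show ?thesis .
qed

end


lemma PT:
  assumes f: "f \<in> Cspace" and z: "Im z = 0" and s: "0 < s" and w0: "w0 \<in> Hc"
    and n1: "aa z fst w0 q \<noteq> 0" and n2: "aa z snd w0 q \<noteq> 0"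
    and h: "(h \<longlongrightarrow> w0) Fl" and ev: "eventually (\<lambda>x. h x \<in> Hc) Fl"
  shows "((\<lambda>x. T_integrand z s f (h x) q) \<longlongrightarrow> T_integrand z s f w0 q) Fl"
proof -
  have n1': "w0 + (z - complex_of_real (fst q)) / sqrt 2 \<noteq> 0" using n1 by (simp add: aa_def)
  have n2': "w0 + (z - complex_of_real (snd q)) / sqrt 2 \<noteq> 0" using n2 by (simp add: aa_def)
  have P1: "((\<lambda>x. phi_plus z q (h x)) \<longlongrightarrow> phi_plus z q w0) Fl"
    unfolding phi_plus_def by (intro tendsto_intros h n1' n2')
  have P2: "((\<lambda>x. phi_minus z q (h x)) \<longlongrightarrow> phi_minus z q w0) Fl"
    unfolding phi_minus_def by (intro tendsto_intros h n1' n2')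
  have cont: "continuous_on Hc f" using f unfolding Cspace_def by blast
  have F1: "((\<lambda>x. f (phi_plus z q (h x))) \<longlongrightarrow> f (phi_plus z q w0)) Fl"
    by (rule continuous_on_tendsto_compose[OF cont P1 phi_plus_Hc[OF z w0]])
       (use ev in \<open>auto elim!: eventually_mono intro: phi_plus_Hc[OF z]\<close>)
  have W1: "((\<lambda>x. cmod (phi_plus z q (h x)) powr s) \<longlongrightarrow> cmod (phi_plus z q w0) powr s) Fl"
    using s by (intro tendsto_powr' tendsto_norm P1 tendsto_const) auto
  have W2: "((\<lambda>x. cmod (phi_minus z q (h x)) powr s) \<longlongrightarrow> cmod (phi_minus z q w0) powr s) Fl"
    using s by (intro tendsto_powr' tendsto_norm P2 tendsto_const) auto
  show ?thesis
    unfolding T_integrand_def by (intro tendsto_intros F1 W1 W2)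
qed

context DB begin

lemma int_mult_ind:
  fixes g :: "real\<times>real \<Rightarrow> complex"
  assumes "integrable M g" "S \<in> sets borel"
  shows "integrable M (\<lambda>q. indicator S q *\<^sub>R g q)"
  by (rule integrable_mult_indicator) (use assms in \<open>auto simp: sets_M_iff\<close>)

lemma rem_bound:
  assumes f: "f \<in> Cspace" and z: "Im z = 0" and w: "w \<in> Hc" and s: "0 < s" "s < 1"
    and eta: "0 < \<eta>" and d: "0 \<le> \<delta>"
  shows "cmod (integral\<^sup>L M (T_integrand z s f w)
          - integral\<^sup>L M (\<lambda>q. indicator (- Ac x0 \<delta>) q *\<^sub>R T_integrand z s f w q))
      \<le> supnorm f * (8 * (D * sqrt 2 * Cc s \<eta> + \<eta> powr (-s) * (D * (2 * sqrt 2 * \<delta>))))"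
proof -
  let ?F = "T_integrand z s f w"
  let ?c = "8 * (D * sqrt 2 * Cc s \<eta> + \<eta> powr (-s) * (D * (2 * sqrt 2 * \<delta>)))"
  have c: "0 \<le> ?c" using D_nn d Cc_nonneg[OF s(2)] by simp
  have iF: "integrable M ?F" by (rule T_integrable[OF f z w s])
  have cAc[measurable]: "- Ac x0 \<delta> \<in> sets borel" by measurable
  have iA: "integrable M (\<lambda>q. indicator (- Ac x0 \<delta>) q *\<^sub>R ?F q)" by (rule int_mult_ind[OF iF cAc])
  have iB: "integrable M (\<lambda>q. indicator (Ac x0 \<delta>) q *\<^sub>R ?F q)" by (rule int_mult_ind[OF iF]) measurable
  have "integral\<^sup>L M ?F - integral\<^sup>L M (\<lambda>q. indicator (- Ac x0 \<delta>) q *\<^sub>R ?F q)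
      = integral\<^sup>L M (\<lambda>q. ?F q - indicator (- Ac x0 \<delta>) q *\<^sub>R ?F q)"
    by (rule Bochner_Integration.integral_diff[symmetric, OF iF iA])
  also have "(\<lambda>q. ?F q - indicator (- Ac x0 \<delta>) q *\<^sub>R ?F q) = (\<lambda>q. indicator (Ac x0 \<delta>) q *\<^sub>R ?F q)"
    by (auto simp: indicator_def)
  finally have eq: "integral\<^sup>L M ?F - integral\<^sup>L M (\<lambda>q. indicator (- Ac x0 \<delta>) q *\<^sub>R ?F q)
      = integral\<^sup>L M (\<lambda>q. indicator (Ac x0 \<delta>) q *\<^sub>R ?F q)" .
  have "(\<integral>\<^sup>+q. ennreal (norm (indicator (Ac x0 \<delta>) q *\<^sub>R ?F q)) \<partial>M)
      \<le> (\<integral>\<^sup>+q. ennreal (supnorm f) * (ennreal (WW z s w q) * indicator (Ac x0 \<delta>) q) \<partial>M)"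
  proof (rule nn_integral_mono)
    fix q
    have "norm (?F q) \<le> supnorm f * WW z s w q" by (rule norm_T_integrand[OF f z w])
    thus "ennreal (norm (indicator (Ac x0 \<delta>) q *\<^sub>R ?F q)) \<le> ennreal (supnorm f) * (ennreal (WW z s w q) * indicator (Ac x0 \<delta>) q)"
      using supnorm_nonneg[OF f] WW_nonneg[of z s w q]
      by (auto simp: indicator_def ennreal_mult[symmetric] intro: ennreal_leI)
  qed
  also have "\<dots> = ennreal (supnorm f) * (\<integral>\<^sup>+q. ennreal (WW z s w q) * indicator (Ac x0 \<delta>) q \<partial>M)"
    by (rule nn_integral_cmult) (simp add: meas_M)
  also have "\<dots> \<le> ennreal (supnorm f) * ennreal ?c"
    by (intro mult_left_mono WW_Ac[OF z s eta d]) auto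
  also have "\<dots> = ennreal (supnorm f * ?c)"
    using supnorm_nonneg[OF f] c by (simp add: ennreal_mult)
  finally have "norm (integral\<^sup>L M (\<lambda>q. indicator (Ac x0 \<delta>) q *\<^sub>R ?F q)) \<le> supnorm f * ?c"
    by (rule norm_integral_le_nn[OF iB]) (use supnorm_nonneg[OF f] c in simp)
  thus ?thesis unfolding eq .
qed

end


lemma Re_aa2: "Im z = 0 \<Longrightarrow> Re (aa z p w q) = (Re w + Re z / sqrt 2) - p q / sqrt 2"
  by (simp add: Re_aa diff_divide_distrib)

lemma aa_far:
  assumes z: "Im z = 0" and s: "0 < s" and d: "0 < \<delta>"
    and far: "\<delta> < \<bar>(Re w0 + Re z / sqrt 2) - p q / sqrt 2\<bar>" and near: "cmod (w - w0) < \<delta>/2"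
  shows "inverse (cmod (aa z p w q)) powr s \<le> (2/\<delta>) powr s"
proof -
  have "\<bar>Re w - Re w0\<bar> \<le> cmod (w - w0)" using abs_Re_le_cmod[of "w - w0"] by simp
  hence "\<delta>/2 \<le> \<bar>Re (aa z p w q)\<bar>" using far near unfolding Re_aa2[OF z] by linarith
  also have "\<dots> \<le> cmod (aa z p w q)" by (rule abs_Re_le_cmod)
  finally have h: "\<delta>/2 \<le> cmod (aa z p w q)" .
  hence "inverse (cmod (aa z p w q)) \<le> inverse (\<delta>/2)" using d by (intro le_imp_inverse_le) auto
  hence "inverse (cmod (aa z p w q)) powr s \<le> inverse (\<delta>/2) powr s" using s by (intro powr_mono2) auto
  thus ?thesis by simp
qed

context DB begin

lemma gA_cont:
  assumes f: "f \<in> Cspace" and z: "Im z = 0" and s: "0 < s" "s < 1" and w0: "w0 \<in> Hc"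
    and d: "0 < \<delta>" and x0: "x0 = Re w0 + Re z / sqrt 2"
  shows "((\<lambda>w. integral\<^sup>L M (\<lambda>q. indicator (- Ac x0 \<delta>) q *\<^sub>R T_integrand z s f w q))
      \<longlongrightarrow> integral\<^sup>L M (\<lambda>q. indicator (- Ac x0 \<delta>) q *\<^sub>R T_integrand z s f w0 q)) (at w0 within Hc)"
proof -
  define G where "G w = (\<lambda>q. indicator (- Ac x0 \<delta>) q *\<^sub>R T_integrand z s f w q)" for w
  define c where "c = supnorm f * (4 * (2/\<delta>) powr s)"
  have Gm: "G w \<in> borel_measurable M" if "w \<in> Hc" for w
  proof -
    have [measurable]: "T_integrand z s f w \<in> borel_measurable borel" by (rule T_integrand_meas[OF f z that])
    show ?thesis unfolding meas_M G_def by measurable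
  qed
  have Gb: "norm (G w q) \<le> c" if "w \<in> Hc" "cmod (w - w0) < \<delta>/2" for w q
  proof (cases "q \<in> Ac x0 \<delta>")
    case True thus ?thesis using supnorm_nonneg[OF f] by (simp add: G_def c_def)
  next
    case False
    hence far1: "\<delta> < \<bar>(Re w0 + Re z / sqrt 2) - fst q / sqrt 2\<bar>"
      and far2: "\<delta> < \<bar>(Re w0 + Re z / sqrt 2) - snd q / sqrt 2\<bar>"
      unfolding Ac_def x0 by auto
    have "WW z s w q \<le> 2 * (inverse (cmod (aa z fst w q)) powr s + inverse (cmod (aa z snd w q)) powr s)"
      by (rule WW_le[OF s(1)])
    also have "\<dots> \<le> 2 * ((2/\<delta>) powr s + (2/\<delta>) powr s)"
      using aa_far[of z s \<delta> w0 fst q w, OF z s(1) d far1 that(2)] aa_far[of z s \<delta> w0 snd q w, OF z s(1) d far2 that(2)] by simp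
    finally have "WW z s w q \<le> 4 * (2/\<delta>) powr s" by simp
    hence "supnorm f * WW z s w q \<le> c"
      unfolding c_def using supnorm_nonneg[OF f] by (intro mult_left_mono) auto
    thus ?thesis using False norm_T_integrand[OF f z that(1), of s q] by (simp add: G_def)
  qed
  show ?thesis
    unfolding G_def[symmetric] tendsto_at_iff_sequentially
  proof (intro allI impI)
    fix X :: "nat \<Rightarrow> complex" assume XH: "\<forall>i. X i \<in> Hc - {w0}" and X: "X \<longlonglongrightarrow> w0"
    define Y where "Y i = (if cmod (X i - w0) < \<delta>/2 then X i else w0)" for i
    have "eventually (\<lambda>i. dist (X i) w0 < \<delta>/2) sequentially" using X d by (intro tendstoD) auto
    hence evXY: "eventually (\<lambda>i. X i = Y i) sequentially"
      by eventually_elim (simp add: Y_def dist_norm)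
    have Y: "Y \<longlonglongrightarrow> w0" using X tendsto_cong[OF evXY] by simp
    have YH: "Y i \<in> Hc" for i using XH w0 by (simp add: Y_def)
    have Yc: "cmod (Y i - w0) < \<delta>/2" for i using d by (simp add: Y_def)
    have lim: "(\<lambda>i. integral\<^sup>L M (G (Y i))) \<longlonglongrightarrow> integral\<^sup>L M (G w0)"
    proof (rule integral_dominated_convergence[where w="\<lambda>_. c"])
      show "G w0 \<in> borel_measurable M" by (rule Gm[OF w0])
      show "\<And>i. G (Y i) \<in> borel_measurable M" by (rule Gm[OF YH])
      show "integrable M (\<lambda>_. c)" by simp
      show "\<And>i. AE q in M. norm (G (Y i) q) \<le> c" using Gb[OF YH Yc] by simp
      show "AE q in M. (\<lambda>i. G (Y i) q) \<longlonglongrightarrow> G w0 q"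
      proof (rule AE_I2)
        fix q
        show "(\<lambda>i. G (Y i) q) \<longlonglongrightarrow> G w0 q"
        proof (cases "q \<in> Ac x0 \<delta>")
          case True thus ?thesis by (simp add: G_def)
        next
          case False
          hence "\<delta> < \<bar>Re (aa z fst w0 q)\<bar>" "\<delta> < \<bar>Re (aa z snd w0 q)\<bar>"
            unfolding Ac_def x0 Re_aa'[OF z] by auto
          hence n: "aa z fst w0 q \<noteq> 0" "aa z snd w0 q \<noteq> 0" using d by auto
          have "(\<lambda>i. T_integrand z s f (Y i) q) \<longlonglongrightarrow> T_integrand z s f w0 q"
            by (rule PT[OF f z s(1) w0 n Y]) (use YH in simp)
          thus ?thesis using False by (simp add: G_def)
        qed
      qed
    qed
    show "((\<lambda>w. integral\<^sup>L M (G w)) \<circ> X) \<longlonglongrightarrow> integral\<^sup>L M (G w0)"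
      using lim tendsto_cong[of "\<lambda>i. integral\<^sup>L M (G (X i))" "\<lambda>i. integral\<^sup>L M (G (Y i))"] evXY
      by (simp add: o_def eventually_mono)
  qed
qed

end


lemma frac_le: "0 \<le> (K::real) \<Longrightarrow> 0 \<le> a \<Longrightarrow> K * (a / (K + 1)) \<le> a"
proof -
  assume K: "0 \<le> K" and a: "0 \<le> a"
  have "K * (a / (K + 1)) = (K * a) / (K + 1)" by simp
  also have "\<dots> \<le> a" using K a by (subst pos_divide_le_eq) (auto simp: algebra_simps)
  finally show ?thesis .
qed

lemma choose_eta:
  assumes s: "0 < s" "s < 1" and a: "0 < a" and K: "0 \<le> K"
  shows "\<exists>\<eta>>0. K * Cc s \<eta> \<le> a"
proof -
  define t where "t = a * (1-s) / (2 * (K+1))"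
  have t: "0 < t" unfolding t_def using s a K by auto
  define \<eta> where "\<eta> = t powr (1/(1-s))"
  have eta: "0 < \<eta>" unfolding \<eta>_def using t by simp
  have "\<eta> powr (1-s) = t" unfolding \<eta>_def using t s by (simp add: powr_powr)
  hence "Cc s \<eta> = a / (K+1)" unfolding Cc_def t_def using s K by (simp add: field_simps)
  hence "K * Cc s \<eta> \<le> a" using frac_le[OF K, of a] a by simp
  thus ?thesis using eta by blast
qed

context DB begin

lemma Tf_cont:
  assumes f: "f \<in> Cspace" and z: "Im z = 0" and s: "0 < s" "s < 1" and w0: "w0 \<in> Hc"
  shows "((\<lambda>w. integral\<^sup>L M (T_integrand z s f w)) \<longlongrightarrow> integral\<^sup>L M (T_integrand z s f w0)) (at w0 within Hc)"
proof (rule tendstoI)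
  fix e :: real assume e: "0 < e"
  define Bf where "Bf = supnorm f"
  have Bf: "0 \<le> Bf" unfolding Bf_def by (rule supnorm_nonneg[OF f])
  define K1 where "K1 = 8 * Bf * D * sqrt 2"
  have K1: "0 \<le> K1" unfolding K1_def using Bf D_nn by simp
  obtain \<eta> where eta: "0 < \<eta>" and eK1: "K1 * Cc s \<eta> \<le> e/8"
    using choose_eta[OF s _ K1, of "e/8"] e by auto
  define K2 where "K2 = 8 * Bf * \<eta> powr (-s) * D * (2 * sqrt 2)"
  have K2: "0 \<le> K2" unfolding K2_def using Bf D_nn by simp
  define \<delta> where "\<delta> = (e/8) / (K2 + 1)"
  have d: "0 < \<delta>" unfolding \<delta>_def using e K2 by simp
  have eK2: "K2 * \<delta> \<le> e/8" unfolding \<delta>_def using frac_le[OF K2, of "e/8"] e by simp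
  define x0 where "x0 = Re w0 + Re z / sqrt 2"
  define g where "g w = integral\<^sup>L M (\<lambda>q. indicator (- Ac x0 \<delta>) q *\<^sub>R T_integrand z s f w q)" for w
  define Tf where "Tf w = integral\<^sup>L M (T_integrand z s f w)" for w
  have rem: "cmod (Tf w - g w) \<le> e/4" if "w \<in> Hc" for w
  proof -
    have "cmod (Tf w - g w) \<le> supnorm f * (8 * (D * sqrt 2 * Cc s \<eta> + \<eta> powr (-s) * (D * (2 * sqrt 2 * \<delta>))))"
      unfolding Tf_def g_def by (rule rem_bound[OF f z that s eta less_imp_le[OF d]])
    also have "\<dots> = K1 * Cc s \<eta> + K2 * \<delta>"
      unfolding K1_def K2_def Bf_def by (simp add: algebra_simps)
    also have "\<dots> \<le> e/4" using eK1 eK2 by simp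
    finally show ?thesis .
  qed
  have "((\<lambda>w. g w) \<longlongrightarrow> g w0) (at w0 within Hc)"
    unfolding g_def by (rule gA_cont[OF f z s w0 d x0_def])
  hence "eventually (\<lambda>w. dist (g w) (g w0) < e/4) (at w0 within Hc)"
    using e by (intro tendstoD) auto
  hence "eventually (\<lambda>w. w \<in> Hc \<and> dist (g w) (g w0) < e/4) (at w0 within Hc)"
    by (simp add: eventually_at_filter eventually_mono)
  thus "eventually (\<lambda>w. dist (Tf w) (Tf w0) < e) (at w0 within Hc)"
  proof eventually_elim
    case (elim w)
    have "dist (Tf w) (Tf w0) \<le> cmod (Tf w - g w) + dist (g w) (g w0) + cmod (g w0 - Tf w0)"
      unfolding dist_norm using norm_triangle_ineq[of "Tf w - g w" "g w - g w0"]
        norm_triangle_ineq[of "Tf w - g w + (g w - g w0)" "g w0 - Tf w0"]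
      by (simp add: algebra_simps)
    also have "\<dots> < e/4 + e/4 + e/4"
      using rem[of w] rem[OF w0] elim by (simp add: norm_minus_commute)
    finally show ?case using e by simp
  qed
qed

end


context DB begin

lemma tight:
  assumes p: "p = fst \<or> p = snd" and e: "0 < e"
  shows "\<exists>L\<ge>0. emeasure M {q. L \<le> \<bar>p q\<bar>} \<le> ennreal e"
proof -
  have pm[measurable]: "p \<in> borel_measurable borel" using p by auto
  define A where "A n = {q. real n \<le> \<bar>p q\<bar>}" for n :: nat
  have "A n \<in> sets borel" for n unfolding A_def by measurable
  hence As: "range A \<subseteq> sets M" using sets_M by auto
  have Ad: "decseq A" unfolding A_def decseq_def by auto
  have "(\<Inter>i. A i) = {}"
  proof -
    have "q \<notin> (\<Inter>i. A i)" for q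
    proof -
      obtain n :: nat where "\<bar>p q\<bar> < real n" using reals_Archimedean2 by blast
      thus ?thesis unfolding A_def by (auto simp: not_le intro!: exI[of _ n])
    qed
    thus ?thesis by blast
  qed
  hence "(\<lambda>n. measure M (A n)) \<longlonglongrightarrow> 0"
    using finite_Lim_measure_decseq[OF As Ad] by simp
  hence "eventually (\<lambda>n. dist (measure M (A n)) 0 < e) sequentially"
    using e by (intro tendstoD) auto
  then obtain n where "dist (measure M (A n)) 0 < e"
    using eventually_sequentially by auto
  hence "measure M (A n) \<le> e" by simp
  hence "emeasure M (A n) \<le> ennreal e" by (simp add: emeasure_eq_measure ennreal_leI)
  thus ?thesis unfolding A_def by (intro exI[of _ "real n"]) auto
qed

lemma psi_far:
  assumes p: "p = fst \<or> p = snd" and s: "0 < s" "s < 1" and e: "0 < e"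
  shows "\<exists>L. \<forall>x. L \<le> \<bar>x\<bar> \<longrightarrow> (\<integral>\<^sup>+q. psi s (x - p q / sqrt 2) \<partial>M) \<le> ennreal (3 * e)"
proof -
  have pm[measurable]: "p \<in> borel_measurable borel" using p by auto
  define R where "R = e powr (-1/s)"
  have R: "0 < R" unfolding R_def using e by simp
  have Re: "R powr (-s) = e" unfolding R_def using e s by (simp add: powr_powr)
  obtain \<eta> where eta: "0 < \<eta>" and eD: "(D * sqrt 2) * Cc s \<eta> \<le> e"
    using choose_eta[OF s e, of "D * sqrt 2"] D_nn by auto
  have ep: "0 < \<eta> powr (-s)" using eta by simp
  obtain L where L: "0 \<le> L" and mL: "emeasure M {q. L \<le> \<bar>p q\<bar>} \<le> ennreal (e / \<eta> powr (-s))"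
    using tight[OF p, of "e / \<eta> powr (-s)"] e ep by auto
  show ?thesis
  proof (intro exI allI impI)
    fix x :: real assume x: "L + R \<le> \<bar>x\<bar>"
    have sub: "{q. \<bar>x - p q / sqrt 2\<bar> \<le> R} \<subseteq> {q. L \<le> \<bar>p q\<bar>}"
    proof
      fix q assume "q \<in> {q. \<bar>x - p q / sqrt 2\<bar> \<le> R}"
      hence "\<bar>x - p q / sqrt 2\<bar> \<le> R" by simp
      moreover have "\<bar>x\<bar> \<le> \<bar>x - p q / sqrt 2\<bar> + \<bar>p q / sqrt 2\<bar>"
        using abs_triangle_ineq[of "x - p q / sqrt 2" "p q / sqrt 2"] by simp
      ultimately have "\<bar>x\<bar> - R \<le> \<bar>p q\<bar> / sqrt 2" by (simp add: abs_divide)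
      moreover have "\<bar>p q\<bar> / sqrt 2 \<le> \<bar>p q\<bar>"
      proof -
        have "1 \<le> sqrt (2::real)" by simp
        hence "\<bar>p q\<bar> * 1 \<le> \<bar>p q\<bar> * sqrt 2" by (intro mult_left_mono) auto
        thus ?thesis by (simp add: divide_le_eq)
      qed
      ultimately show "q \<in> {q. L \<le> \<bar>p q\<bar>}" using x by auto
    qed
    have mS: "emeasure M {q. \<bar>x - p q / sqrt 2\<bar> \<le> R} \<le> ennreal (e / \<eta> powr (-s))"
    proof -
      have "{q. L \<le> \<bar>p q\<bar>} \<in> sets M" unfolding sets_M_iff by measurable
      thus ?thesis using emeasure_mono[OF sub, of M] mL by (auto intro: order_trans)
    qed
    hence m2: "ennreal (\<eta> powr (-s)) * emeasure M {q. \<bar>x - p q / sqrt 2\<bar> \<le> R} \<le> ennreal e"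
    proof -
      have "ennreal (\<eta> powr (-s)) * emeasure M {q. \<bar>x - p q / sqrt 2\<bar> \<le> R}
          \<le> ennreal (\<eta> powr (-s)) * ennreal (e / \<eta> powr (-s))"
        by (rule mult_left_mono[OF mS]) simp
      also have "\<dots> = ennreal (\<eta> powr (-s) * (e / \<eta> powr (-s)))"
        by (rule ennreal_mult[symmetric]) (use ep e in auto)
      also have "\<eta> powr (-s) * (e / \<eta> powr (-s)) = e" using ep by simp
      finally show ?thesis .
    qed
    have "(\<integral>\<^sup>+q. psi s (x - p q / sqrt 2) \<partial>M)
       \<le> ennreal (D * sqrt 2 * Cc s \<eta>) + ennreal (\<eta> powr (-s)) * emeasure M {q. \<bar>x - p q / sqrt 2\<bar> \<le> R}
          + ennreal (R powr (-s))" by (rule psi_tot[OF p s eta R])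
    also have "\<dots> \<le> ennreal e + ennreal e + ennreal e"
      using eD m2 Re by (intro add_mono) auto
    also have "\<dots> = ennreal (3 * e)" using e by (simp flip: ennreal_plus)
    finally show "(\<integral>\<^sup>+q. psi s (x - p q / sqrt 2) \<partial>M) \<le> ennreal (3 * e)" .
  qed
qed

end


context DB begin

lemma nnF:
  assumes f: "f \<in> Cspace" and z: "Im z = 0" and w: "w \<in> Hc"
  shows "(\<integral>\<^sup>+q. ennreal (norm (T_integrand z s f w q)) \<partial>M)
     \<le> ennreal (supnorm f) * (\<integral>\<^sup>+q. ennreal (WW z s w q) \<partial>M)"
proof -
  have "(\<integral>\<^sup>+q. ennreal (norm (T_integrand z s f w q)) \<partial>M) \<le> (\<integral>\<^sup>+q. ennreal (supnorm f) * ennreal (WW z s w q) \<partial>M)"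
    using norm_T_integrand[OF f z w] supnorm_nonneg[OF f]
    by (intro nn_integral_mono) (simp add: ennreal_mult[symmetric] WW_nonneg)
  also have "\<dots> = ennreal (supnorm f) * (\<integral>\<^sup>+q. ennreal (WW z s w q) \<partial>M)"
    by (rule nn_integral_cmult) (simp add: meas_M)
  finally show ?thesis .
qed

lemma norm_Tf_le:
  assumes f: "f \<in> Cspace" and z: "Im z = 0" and w: "w \<in> Hc" and s: "0 < s" "s < 1"
    and c: "0 \<le> c" and W: "(\<integral>\<^sup>+q. ennreal (WW z s w q) \<partial>M) \<le> ennreal c"
  shows "cmod (integral\<^sup>L M (T_integrand z s f w)) \<le> supnorm f * c"
proof (rule norm_integral_le_nn[OF T_integrable[OF f z w s]])
  have "(\<integral>\<^sup>+q. ennreal (norm (T_integrand z s f w q)) \<partial>M) \<le> ennreal (supnorm f) * ennreal c"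
    using nnF[OF f z w, of s] W by (meson mult_left_mono order_trans zero_le)
  thus "(\<integral>\<^sup>+q. ennreal (norm (T_integrand z s f w q)) \<partial>M) \<le> ennreal (supnorm f * c)"
    using supnorm_nonneg[OF f] c by (simp add: ennreal_mult)
  show "0 \<le> supnorm f * c" using supnorm_nonneg[OF f] c by simp
qed

lemma WW_far:
  assumes z: "Im z = 0" and s: "0 < s" "s < 1" and e: "0 < e"
  shows "\<exists>b. \<forall>w\<in>Hc. b \<le> cmod w \<longrightarrow> (\<integral>\<^sup>+q. ennreal (WW z s w q) \<partial>M) \<le> ennreal e"
proof -
  obtain L1 where L1: "\<And>x. L1 \<le> \<bar>x\<bar> \<Longrightarrow> (\<integral>\<^sup>+q. psi s (x - fst q / sqrt 2) \<partial>M) \<le> ennreal (3 * (e/12))"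
    using psi_far[of fst s "e/12"] s e by auto
  obtain L2 where L2: "\<And>x. L2 \<le> \<bar>x\<bar> \<Longrightarrow> (\<integral>\<^sup>+q. psi s (x - snd q / sqrt 2) \<partial>M) \<le> ennreal (3 * (e/12))"
    using psi_far[of snd s "e/12"] s e by auto
  define Y where "Y = (e/4) powr (-1/s)"
  have Y: "0 < Y" unfolding Y_def using e by simp
  have Ys: "Y powr (-s) = e/4" unfolding Y_def using e s by (simp add: powr_powr)
  show ?thesis
  proof (intro exI ballI impI)
    fix w assume w: "w \<in> Hc" and b: "Y + (max L1 L2 + \<bar>Re z\<bar> / sqrt 2) \<le> cmod w"
    show "(\<integral>\<^sup>+q. ennreal (WW z s w q) \<partial>M) \<le> ennreal e"
    proof (cases "Y \<le> Im w")
      case True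
      have "WW z s w q \<le> e" for q
      proof -
        have "WW z s w q \<le> 4 * Im w powr (-s)" using WW_Im[OF s(1) z] True Y by auto
        also have "Im w powr (-s) \<le> Y powr (-s)" using True Y s by (intro powr_mono2') auto
        finally show ?thesis using Ys by simp
      qed
      hence "(\<integral>\<^sup>+q. ennreal (WW z s w q) \<partial>M) \<le> (\<integral>\<^sup>+q. ennreal e \<partial>M)"
        by (intro nn_integral_mono ennreal_leI)
      thus ?thesis by simp
    next
      case False
      have "cmod w \<le> \<bar>Re w\<bar> + \<bar>Im w\<bar>" by (rule cmod_le)
      moreover have "\<bar>Im w\<bar> < Y" using False w by (auto simp: Hc_def)
      ultimately have "max L1 L2 + \<bar>Re z\<bar> / sqrt 2 \<le> \<bar>Re w\<bar>" using b by linarith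
      moreover have "\<bar>Re w\<bar> \<le> \<bar>Re w + Re z / sqrt 2\<bar> + \<bar>Re z\<bar> / sqrt 2"
        using abs_triangle_ineq4[of "Re w + Re z / sqrt 2" "Re z / sqrt 2"] by (simp add: abs_divide)
      ultimately have x: "max L1 L2 \<le> \<bar>Re w + Re z / sqrt 2\<bar>" by linarith
      have "(\<integral>\<^sup>+q. ennreal (WW z s w q) \<partial>M)
        \<le> 2 * ((\<integral>\<^sup>+q. psi s ((Re w + Re z / sqrt 2) - fst q / sqrt 2) \<partial>M)
          + (\<integral>\<^sup>+q. psi s ((Re w + Re z / sqrt 2) - snd q / sqrt 2) \<partial>M))"
        by (rule WW_int[OF z s])
      also have "\<dots> \<le> 2 * (ennreal (3 * (e/12)) + ennreal (3 * (e/12)))"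
        using L1[of "Re w + Re z / sqrt 2"] L2[of "Re w + Re z / sqrt 2"] x
        by (intro mult_left_mono add_mono) auto
      also have "\<dots> = ennreal 2 * ennreal (e/2)" using e by (simp flip: ennreal_plus)
      also have "\<dots> = ennreal (2 * (e/2))" by (rule ennreal_mult[symmetric]) (use e in auto)
      also have "\<dots> = ennreal e" by simp
      finally show ?thesis .
    qed
  qed
qed

lemma Tf_lim:
  assumes f: "f \<in> Cspace" and z: "Im z = 0" and s: "0 < s" "s < 1"
  shows "((\<lambda>w. integral\<^sup>L M (T_integrand z s f w)) \<longlongrightarrow> 0) (inf at_infinity (principal Hc))"
proof (rule tendstoI)
  fix e :: real assume e: "0 < e"
  define Bf where "Bf = supnorm f"
  have Bf: "0 \<le> Bf" unfolding Bf_def by (rule supnorm_nonneg[OF f])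
  define e' where "e' = e / (2 * (Bf + 1))"
  have e': "0 < e'" unfolding e'_def using e Bf by simp
  have Be: "Bf * e' < e"
  proof -
    have "Bf * e' = e * (Bf / (2 * (Bf + 1)))" unfolding e'_def by simp
    also have "Bf / (2 * (Bf + 1)) < 1" using Bf by (simp add: divide_less_eq)
    hence "e * (Bf / (2 * (Bf + 1))) < e * 1" using e by (intro mult_strict_left_mono) auto
    finally show ?thesis by simp
  qed
  obtain b where b: "\<And>w. w \<in> Hc \<Longrightarrow> b \<le> cmod w \<Longrightarrow> (\<integral>\<^sup>+q. ennreal (WW z s w q) \<partial>M) \<le> ennreal e'"
    using WW_far[OF z s e'] by blast
  have "eventually (\<lambda>w. w \<in> Hc \<longrightarrow> dist (integral\<^sup>L M (T_integrand z s f w)) 0 < e) at_infinity"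
    unfolding eventually_at_infinity
  proof (intro exI allI impI)
    fix w :: complex assume "b \<le> norm w" "w \<in> Hc"
    hence "cmod (integral\<^sup>L M (T_integrand z s f w)) \<le> supnorm f * e'"
      using b e' by (intro norm_Tf_le[OF f z _ s]) auto
    thus "dist (integral\<^sup>L M (T_integrand z s f w)) 0 < e" using Be unfolding Bf_def by simp
  qed
  thus "eventually (\<lambda>w. dist (integral\<^sup>L M (T_integrand z s f w)) 0 < e) (inf at_infinity (principal Hc))"
    by (simp add: eventually_inf_principal)
qed

end


lemma arith_aux: "(X::real) \<le> 1/16 \<Longrightarrow> Y = 1/32 \<Longrightarrow> 4 * (X + 2 * Y) \<le> 1/2"
  by (simp add: algebra_simps)

theorem lemma6p1:
  fixes s Bnu B0 B1 K :: real
  assumes "0 < s" and "s < 1"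
  shows "\<exists>\<kappa>0::real. \<forall>nu sg s0 s1 (\<kappa>::real).
           Assumptions2 nu sg s0 s1 K Bnu B0 B1 \<and> 0 \<le> \<kappa> \<and> \<kappa>0 \<le> \<kappa> \<longrightarrow>
           (\<exists>c<1. \<forall>E::real. \<forall>f\<in>Cspace.
              (\<forall>w\<in>Hc. integrable (mu_law nu sg \<kappa>) (T_integrand (complex_of_real E) s f w)) \<and>
              T_op nu sg \<kappa> (complex_of_real E) s f \<in> Cspace \<and>
              (T_op nu sg \<kappa> (complex_of_real E) s f \<longlongrightarrow> 0) (inf at_infinity (principal Hc)) \<and>
              supnorm (T_op nu sg \<kappa> (complex_of_real E) s f) \<le> c * supnorm f)"
proof -
  have s: "0 < s" "s < 1" using assms by auto
  define R where "R = 32 powr (1/s)"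
  have R: "0 < R" unfolding R_def by simp
  have Rs: "R powr (-s) = 1/32" unfolding R_def using s by (simp add: powr_powr powr_minus_divide)
  define CR where "CR = Cc s R"
  have CR: "0 \<le> CR" unfolding CR_def using Cc_nonneg[OF s(2)] .
  define B where "B = max B0 B1"
  define \<kappa>0 where "\<kappa>0 = 1 + 16 * sqrt 2 * CR * \<bar>B\<bar>"
  have k01: "1 \<le> \<kappa>0" unfolding \<kappa>0_def using CR by simp
  show ?thesis
  proof (rule exI[of _ \<kappa>0], intro allI impI)
    fix nu sg s0 s1 \<kappa>
    assume H: "Assumptions2 nu sg s0 s1 K Bnu B0 B1 \<and> 0 \<le> \<kappa> \<and> \<kappa>0 \<le> \<kappa>"
    hence A: "Assumptions2 nu sg s0 s1 K Bnu B0 B1" and k0: "\<kappa>0 \<le> \<kappa>" by auto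
    have k: "0 < \<kappa>" using k0 k01 by linarith
    interpret DB "mu_law nu sg \<kappa>" "B / \<kappa>"
      unfolding B_def by (rule mu_law_facts[OF A k])
    have B: "0 \<le> B" using D_nn k by (simp add: zero_le_divide_iff)
    have DC: "B / \<kappa> * sqrt 2 * CR \<le> 1/16"
    proof -
      have "16 * (B * sqrt 2 * CR) \<le> \<kappa>" using k0 B unfolding \<kappa>0_def by (simp add: algebra_simps)
      hence "B * sqrt 2 * CR \<le> \<kappa> / 16" by simp
      hence "B * sqrt 2 * CR / \<kappa> \<le> 1/16" using k by (simp add: divide_le_eq)
      thus ?thesis by (simp add: algebra_simps)
    qed
    have Wb: "(\<integral>\<^sup>+q. ennreal (WW z s w q) \<partial>mu_law nu sg \<kappa>) \<le> ennreal (1/2)" if z: "Im z = 0" for z w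
    proof -
      have "(\<integral>\<^sup>+q. ennreal (WW z s w q) \<partial>mu_law nu sg \<kappa>) \<le> ennreal (4 * (B / \<kappa> * sqrt 2 * Cc s R + 2 * R powr (-s)))"
        by (rule WW_main[OF z s R])
      also have "\<dots> \<le> ennreal (1/2)"
      proof (intro ennreal_leI)
        show "4 * (B / \<kappa> * sqrt 2 * Cc s R + 2 * R powr (-s)) \<le> 1/2"
          using arith_aux[OF DC[unfolded CR_def] Rs] .
      qed
      finally show ?thesis .
    qed
    show "\<exists>c<1. \<forall>E::real. \<forall>f\<in>Cspace.
              (\<forall>w\<in>Hc. integrable (mu_law nu sg \<kappa>) (T_integrand (complex_of_real E) s f w)) \<and>
              T_op nu sg \<kappa> (complex_of_real E) s f \<in> Cspace \<and>
              (T_op nu sg \<kappa> (complex_of_real E) s f \<longlongrightarrow> 0) (inf at_infinity (principal Hc)) \<and>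
              supnorm (T_op nu sg \<kappa> (complex_of_real E) s f) \<le> c * supnorm f"
    proof (rule exI[of _ "1/2"], rule conjI[OF _ allI], simp, rule ballI)
      fix E :: real and f assume f: "f \<in> Cspace"
      define z where "z = complex_of_real E"
      have z: "Im z = 0" unfolding z_def by simp
      have Top: "T_op nu sg \<kappa> z s f = (\<lambda>w. integral\<^sup>L (mu_law nu sg \<kappa>) (T_integrand z s f w))"
        unfolding T_op_def ..
      have i: "\<forall>w\<in>Hc. integrable (mu_law nu sg \<kappa>) (T_integrand (complex_of_real E) s f w)"
        using T_integrable[OF f z _ s] unfolding z_def by blast
      have lim: "(T_op nu sg \<kappa> z s f \<longlongrightarrow> 0) (inf at_infinity (principal Hc))"
        unfolding Top by (rule Tf_lim[OF f z s])
      have "continuous_on Hc (T_op nu sg \<kappa> z s f)"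
        unfolding continuous_on_def Top using Tf_cont[OF f z s] by blast
      hence C: "T_op nu sg \<kappa> z s f \<in> Cspace"
        using lim unfolding Cspace_def by blast
      have "supnorm (T_op nu sg \<kappa> z s f) \<le> supnorm f * (1/2)"
        unfolding Top by (rule supnorm_le, rule norm_Tf_le[OF f z _ s _ Wb[OF z]]) auto
      thus "(\<forall>w\<in>Hc. integrable (mu_law nu sg \<kappa>) (T_integrand (complex_of_real E) s f w)) \<and>
              T_op nu sg \<kappa> (complex_of_real E) s f \<in> Cspace \<and>
              (T_op nu sg \<kappa> (complex_of_real E) s f \<longlongrightarrow> 0) (inf at_infinity (principal Hc)) \<and>
              supnorm (T_op nu sg \<kappa> (complex_of_real E) s f) \<le> 1/2 * supnorm f"
        using i C lim unfolding z_def by (simp add: mult.commute)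
    qed
  qed
qed


end
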